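(* Let $H_3$ be the simply connected 3-dimensional Heisenberg group, realized as $\mathbb{R}^3$ with coordinates $(x,y,z)$ and group law $(a,b,c)\cdot(x,y,z)=(a+x,\,b+y,\,c+z-ay)$, so that $F_1=\partial_z$, $F_2=\partial_y-x\partial_z$, $F_3=\partial_x$ are left-invariant with the only nonzero bracket $[F_2,F_3]=F_1$. Consider the left-invariant Lorentzian metrics $g_1=-dx^2+dy^2+(x\,dy+dz)^2$ and $g_2=dx^2+dy^2-(x\,dy+dz)^2$ (so $g_1$ makes $F_1,F_2,F_3$ orthonormal with $F_3$ timelike, and $g_2$ makes them orthonormal with $F_1$ timelike). Then $g_1$ and $g_2$ are nilsolitons, and each of $(\mathfrak{h}_3,g_1)$, $(\mathfrak{h}_3,g_2)$ admits a metric solvable extension which is an Einstein metric.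
   Context: For a simply connected Lie group $G$ with Lie algebra $\mathfrak{g}$ and left-invariant pseudo-Riemannian metric $g$, $g$ is an algebraic Ricci soliton if $\mathrm{ric}=c\,\mathrm{Id}+D$ for some $c\in\mathbb{R}$ and some derivation $D$ of $\mathfrak{g}$, where $\mathrm{ric}$ is the Ricci operator ($g(\mathrm{ric}X,Y)=\mathrm{Ric}(X,Y)$); it is a nilsoliton if $G$ is nilpotent. A metric solvable extension of $(\mathfrak{n},g)$ is a solvable Lie algebra $\mathfrak{s}=\mathfrak{a}\oplus\mathfrak{n}$ (as vector spaces) with bracket $[\cdot,\cdot]'$ and a pseudo-Riemannian inner product $\tilde g$ such that $[\mathfrak{s},\mathfrak{s}]'=\mathfrak{n}=\mathfrak{a}^{\perp}$, $[X,Y]'=[X,Y]$ and $\tilde g(X,Y)=g(X,Y)$ for all $X,Y\in\mathfrak{n}$. It is Einstein if the corresponding left-invariant metric satisfies $\mathrm{Ric}(\tilde g)=\kappa\tilde g$ for a constant $\kappa$. $\mathfrak{h}_3$ denotes the Lie algebra of $H_3$. *)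

theory Defs
  imports Main "HOL.Real"
begin

text \<open>
  A Lie algebra of
  dimension N has basis e_0,...,e_(N-1); it is given by structure constants
  c i j k = (e_k-component of [e_i,e_j]).
\<close>

type_synonym sconst = "nat \<Rightarrow> nat \<Rightarrow> nat \<Rightarrow> real"
type_synonym gram = "nat \<Rightarrow> nat \<Rightarrow> real"

definition vecs :: "nat \<Rightarrow> (nat \<Rightarrow> real) set" where
  "vecs N = {X. \<forall>i\<ge>N. X i = 0}"

definition lin_span :: "(nat \<Rightarrow> real) set \<Rightarrow> (nat \<Rightarrow> real) set" where
  "lin_span S = {v. \<exists>F a. finite F \<and> F \<subseteq> S \<and> v = (\<lambda>p. \<Sum>u\<in>F. a u * u p)}"

definition brk :: "nat \<Rightarrow> sconst \<Rightarrow> (nat \<Rightarrow> real) \<Rightarrow> (nat \<Rightarrow> real) \<Rightarrow> (nat \<Rightarrow> real)" where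
  "brk N c X Y = (\<lambda>k. if k < N then (\<Sum>i<N. \<Sum>j<N. X i * Y j * c i j k) else 0)"

definition ip :: "nat \<Rightarrow> gram \<Rightarrow> (nat \<Rightarrow> real) \<Rightarrow> (nat \<Rightarrow> real) \<Rightarrow> real" where
  "ip N G X Y = (\<Sum>i<N. \<Sum>j<N. X i * G i j * Y j)"

definition lie_alg :: "nat \<Rightarrow> sconst \<Rightarrow> bool" where
  "lie_alg N c \<longleftrightarrow>
     (\<forall>i<N. \<forall>j<N. \<forall>k<N. c i j k = - c j i k) \<and>
     (\<forall>i<N. \<forall>j<N. \<forall>l<N. \<forall>p<N.
        (\<Sum>m<N. c j l m * c i m p + c l i m * c j m p + c i j m * c l m p) = 0)"

definition pr_metric :: "nat \<Rightarrow> gram \<Rightarrow> bool" where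
  "pr_metric N G \<longleftrightarrow>
     (\<forall>i<N. \<forall>j<N. G i j = G j i) \<and>
     (\<forall>X\<in>vecs N. (\<forall>Y\<in>vecs N. ip N G X Y = 0) \<longrightarrow> X = (\<lambda>_. 0))"

fun lcs :: "nat \<Rightarrow> sconst \<Rightarrow> nat \<Rightarrow> (nat \<Rightarrow> real) set" where
  "lcs N c 0 = vecs N"
| "lcs N c (Suc m) = lin_span {brk N c X Y | X Y. X \<in> vecs N \<and> Y \<in> lcs N c m}"

fun dser :: "nat \<Rightarrow> sconst \<Rightarrow> nat \<Rightarrow> (nat \<Rightarrow> real) set" where
  "dser N c 0 = vecs N"
| "dser N c (Suc m) = lin_span {brk N c X Y | X Y. X \<in> dser N c m \<and> Y \<in> dser N c m}"

definition nilpotent_la :: "nat \<Rightarrow> sconst \<Rightarrow> bool" where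
  "nilpotent_la N c \<longleftrightarrow> (\<exists>m. lcs N c m = {\<lambda>_. 0})"

definition solvable_la :: "nat \<Rightarrow> sconst \<Rightarrow> bool" where
  "solvable_la N c \<longleftrightarrow> (\<exists>m. dser N c m = {\<lambda>_. 0})"

text \<open>Levi-Civita connection of the left-invariant metric, on the basis:
  Gam i j k = e_k-component of nabla_(e_i) e_j, determined by the Koszul formula
  2 g(nabla_X Y, Z) = g([X,Y],Z) - g([Y,Z],X) + g([Z,X],Y).\<close>
definition christoffel :: "nat \<Rightarrow> sconst \<Rightarrow> gram \<Rightarrow> sconst" where
  "christoffel N c G = (THE Gam.
     (\<forall>i j k. (i \<ge> N \<or> j \<ge> N \<or> k \<ge> N) \<longrightarrow> Gam i j k = 0) \<and>
     (\<forall>i<N. \<forall>j<N. \<forall>l<N.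
        (\<Sum>k<N. Gam i j k * G k l) =
        ((\<Sum>m<N. c i j m * G m l) - (\<Sum>m<N. c j l m * G m i) + (\<Sum>m<N. c l i m * G m j)) / 2))"

text \<open>curvature R(X,Y) = [nabla_X, nabla_Y] - nabla_[X,Y];
  curv a b d p = e_p-component of R(e_a,e_b) e_d\<close>
definition curv :: "nat \<Rightarrow> sconst \<Rightarrow> gram \<Rightarrow> nat \<Rightarrow> nat \<Rightarrow> nat \<Rightarrow> nat \<Rightarrow> real" where
  "curv N c G a b d p = (let Gam = christoffel N c G in
     (\<Sum>m<N. Gam b d m * Gam a m p - Gam a d m * Gam b m p - c a b m * Gam m d p))"

text \<open>Ricci tensor Ric(X,Y) = trace(Z \<mapsto> R(Z,X)Y), on the basis\<close>
definition ricci :: "nat \<Rightarrow> sconst \<Rightarrow> gram \<Rightarrow> gram" where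
  "ricci N c G i j = (\<Sum>a<N. curv N c G a i j a)"

text \<open>Ricci operator: g(ric X, Y) = Ric(X,Y); matrix r k i = e_k-component of ric e_i\<close>
definition ricci_op :: "nat \<Rightarrow> sconst \<Rightarrow> gram \<Rightarrow> nat \<Rightarrow> nat \<Rightarrow> real" where
  "ricci_op N c G = (THE r.
     (\<forall>k i. (k \<ge> N \<or> i \<ge> N) \<longrightarrow> r k i = 0) \<and>
     (\<forall>i<N. \<forall>l<N. (\<Sum>k<N. r k i * G k l) = ricci N c G i l))"

text \<open>derivation, as matrix: D e_j = sum_k D k j e_k\<close>
definition derivation :: "nat \<Rightarrow> sconst \<Rightarrow> (nat \<Rightarrow> nat \<Rightarrow> real) \<Rightarrow> bool" where
  "derivation N c D \<longleftrightarrow>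
     (\<forall>i<N. \<forall>j<N. \<forall>k<N.
        (\<Sum>m<N. c i j m * D k m) = (\<Sum>m<N. D m i * c m j k) + (\<Sum>m<N. D m j * c i m k))"

definition alg_ricci_soliton :: "nat \<Rightarrow> sconst \<Rightarrow> gram \<Rightarrow> bool" where
  "alg_ricci_soliton N c G \<longleftrightarrow> lie_alg N c \<and> pr_metric N G \<and>
     (\<exists>(cst::real) D. derivation N c D \<and>
        (\<forall>k<N. \<forall>i<N. ricci_op N c G k i = cst * (if k = i then 1 else 0) + D k i))"

definition nilsoliton :: "nat \<Rightarrow> sconst \<Rightarrow> gram \<Rightarrow> bool" where
  "nilsoliton N c G \<longleftrightarrow> nilpotent_la N c \<and> alg_ricci_soliton N c G"

definition einstein :: "nat \<Rightarrow> sconst \<Rightarrow> gram \<Rightarrow> bool" where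
  "einstein N c G \<longleftrightarrow> (\<exists>\<kappa>::real. \<forall>i<N. \<forall>j<N. ricci N c G i j = \<kappa> * G i j)"

text \<open>metric solvable extension s = a (+) n of (n, c, G): s has basis
  e_0..e_(n-1) (spanning n) and e_n..e_(n+k-1) (spanning a).\<close>
definition metric_solv_ext :: "nat \<Rightarrow> sconst \<Rightarrow> gram \<Rightarrow> nat \<Rightarrow> sconst \<Rightarrow> gram \<Rightarrow> bool" where
  "metric_solv_ext n c G N c' G' \<longleftrightarrow>
     n \<le> N \<and> lie_alg N c' \<and> solvable_la N c' \<and> pr_metric N G' \<and>
     dser N c' 1 = vecs n \<and>
     {X\<in>vecs N. \<forall>Y\<in>vecs N. (\<forall>i<n. Y i = 0) \<longrightarrow> ip N G' X Y = 0} = vecs n \<and>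
     (\<forall>i<n. \<forall>j<n. \<forall>k<N. c' i j k = (if k < n then c i j k else 0)) \<and>
     (\<forall>i<n. \<forall>j<n. G' i j = G i j)"

text \<open>Heisenberg algebra h3 in the basis F1,F2,F3 (indices 0,1,2): [F2,F3] = F1\<close>
definition h3 :: sconst where
  "h3 i j k = (if i = 1 \<and> j = 2 \<and> k = 0 then 1
               else if i = 2 \<and> j = 1 \<and> k = 0 then -1 else 0)"

definition g1 :: gram where
  "g1 i j = (if i = j \<and> i < 3 then (if i = 2 then -1 else 1) else 0)"

definition g2 :: gram where
  "g2 i j = (if i = j \<and> i < 3 then (if i = 0 then -1 else 1) else 0)"

end

theory Submission imports Defs begin
lemma sum3: "(\<Sum>i<(3::nat). f i) = f 0 + f 1 + f 2" by (simp add: eval_nat_numeral)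
lemma sum4: "(\<Sum>i<(4::nat). f i) = f 0 + f 1 + f 2 + f 3" by (simp add: eval_nat_numeral)
lemma all3: "(\<forall>i<(3::nat). P i) = (P 0 \<and> P 1 \<and> P 2)" by (auto simp: eval_nat_numeral less_Suc_eq)
lemma all4: "(\<forall>i<(4::nat). P i) = (P 0 \<and> P 1 \<and> P 2 \<and> P 3)" by (auto simp: eval_nat_numeral less_Suc_eq)

definition diagm :: "nat \<Rightarrow> (nat \<Rightarrow> real) \<Rightarrow> gram" where
  "diagm N d i j = (if i = j \<and> i < N then d i else 0)"

lemma sum_diag_r: "l < N \<Longrightarrow> (\<Sum>k<N. f k * diagm N d k l) = f l * d l"
proof -
  assume l: "l < N"
  have "(\<Sum>k<N. f k * diagm N d k l) = (\<Sum>k<N. if k = l then f l * d l else 0)"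
    by (rule sum.cong) (auto simp: diagm_def)
  also have "\<dots> = f l * d l" using l by (simp add: sum.delta')
  finally show ?thesis .
qed

lemma ip_diag: "ip N (diagm N d) X Y = (\<Sum>i<N. X i * d i * Y i)"
proof -
  have "\<And>i. i < N \<Longrightarrow> (\<Sum>j<N. X i * diagm N d i j * Y j) = X i * d i * Y i"
  proof -
    fix i assume i: "i < N"
    have "(\<Sum>j<N. X i * diagm N d i j * Y j) = (\<Sum>j<N. if j = i then X i * d i * Y i else 0)"
      by (rule sum.cong) (auto simp: diagm_def)
    also have "\<dots> = X i * d i * Y i" using i by (simp add: sum.delta')
    finally show "(\<Sum>j<N. X i * diagm N d i j * Y j) = X i * d i * Y i" .
  qed
  then show ?thesis unfolding ip_def by (intro sum.cong) auto
qed

lemma pr_diag: assumes "\<forall>i<N. d i \<noteq> 0" shows "pr_metric N (diagm N d)"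
  unfolding pr_metric_def
proof (intro conjI ballI impI allI)
  fix i j assume "i < N" "j < N" then show "diagm N d i j = diagm N d j i" by (auto simp: diagm_def)
next
  fix X assume X: "X \<in> vecs N" and H: "\<forall>Y\<in>vecs N. ip N (diagm N d) X Y = 0"
  show "X = (\<lambda>_. 0)"
  proof
    fix p show "X p = 0"
    proof (cases "p < N")
      case True
      let ?Y = "\<lambda>i. if i = p then 1 else (0::real)"
      have "?Y \<in> vecs N" using True by (auto simp: vecs_def)
      with H have "ip N (diagm N d) X ?Y = 0" by blast
      moreover have "ip N (diagm N d) X ?Y = X p * d p" using True
        by (simp add: ip_diag if_distrib sum.delta' cong: if_cong)
      ultimately show ?thesis using assms True by simp
    next
      case False then show ?thesis using X by (simp add: vecs_def)
    qed
  qed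
qed

definition chr :: "nat \<Rightarrow> sconst \<Rightarrow> (nat \<Rightarrow> real) \<Rightarrow> sconst" where
  "chr N c d i j l = (if i < N \<and> j < N \<and> l < N then (c i j l * d l - c j l i * d i + c l i j * d j) / (2 * d l) else 0)"

lemma christoffel_diag: assumes d: "\<forall>i<N. d i \<noteq> 0"
  shows "christoffel N c (diagm N d) = chr N c d"
  unfolding christoffel_def
proof (rule the_equality)
  show "(\<forall>i j k. (i \<ge> N \<or> j \<ge> N \<or> k \<ge> N) \<longrightarrow> chr N c d i j k = 0) \<and>
     (\<forall>i<N. \<forall>j<N. \<forall>l<N.
        (\<Sum>k<N. chr N c d i j k * diagm N d k l) =
        ((\<Sum>m<N. c i j m * diagm N d m l) - (\<Sum>m<N. c j l m * diagm N d m i) + (\<Sum>m<N. c l i m * diagm N d m j)) / 2)"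
  proof (intro conjI allI impI)
    fix i j k assume "i \<ge> N \<or> j \<ge> N \<or> k \<ge> N" then show "chr N c d i j k = 0" by (auto simp: chr_def)
  next
    fix i j l assume i: "i < N" and j: "j < N" and l: "l < N"
    show "(\<Sum>k<N. chr N c d i j k * diagm N d k l) =
        ((\<Sum>m<N. c i j m * diagm N d m l) - (\<Sum>m<N. c j l m * diagm N d m i) + (\<Sum>m<N. c l i m * diagm N d m j)) / 2"
      unfolding sum_diag_r[OF i] sum_diag_r[OF j] sum_diag_r[OF l]
      using d i j l by (simp add: chr_def field_simps)
  qed
next
  fix Gam assume H: "(\<forall>i j k. (i \<ge> N \<or> j \<ge> N \<or> k \<ge> N) \<longrightarrow> Gam i j k = 0) \<and>
     (\<forall>i<N. \<forall>j<N. \<forall>l<N.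
        (\<Sum>k<N. Gam i j k * diagm N d k l) =
        ((\<Sum>m<N. c i j m * diagm N d m l) - (\<Sum>m<N. c j l m * diagm N d m i) + (\<Sum>m<N. c l i m * diagm N d m j)) / 2)"
  show "Gam = chr N c d"
  proof (intro ext)
    fix i j l
    show "Gam i j l = chr N c d i j l"
    proof (cases "i < N \<and> j < N \<and> l < N")
      case True
      then have "Gam i j l * d l = (c i j l * d l - c j l i * d i + c l i j * d j) / 2"
        using H by (simp add: sum_diag_r)
      then show ?thesis using True d by (simp add: chr_def field_simps)
    next
      case False then show ?thesis using H by (auto simp: chr_def)
    qed
  qed
qed

lemma ricci_op_diag: assumes d: "\<forall>i<N. d i \<noteq> 0"
  shows "ricci_op N c (diagm N d) = (\<lambda>k i. if k < N \<and> i < N then ricci N c (diagm N d) i k / d k else 0)"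
  unfolding ricci_op_def
proof (rule the_equality)
  show "(\<forall>k i. (k \<ge> N \<or> i \<ge> N) \<longrightarrow> (\<lambda>k i. if k < N \<and> i < N then ricci N c (diagm N d) i k / d k else 0) k i = 0) \<and>
     (\<forall>i<N. \<forall>l<N. (\<Sum>k<N. (\<lambda>k i. if k < N \<and> i < N then ricci N c (diagm N d) i k / d k else 0) k i * diagm N d k l) = ricci N c (diagm N d) i l)"
  proof (intro conjI allI impI)
    fix i l assume i: "i < N" and l: "l < N"
    show "(\<Sum>k<N. (\<lambda>k i. if k < N \<and> i < N then ricci N c (diagm N d) i k / d k else 0) k i * diagm N d k l) = ricci N c (diagm N d) i l"
      unfolding sum_diag_r[OF l] using d i l by simp
  qed auto
next
  fix r assume H: "(\<forall>k i. (k \<ge> N \<or> i \<ge> N) \<longrightarrow> r k i = 0) \<and>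
     (\<forall>i<N. \<forall>l<N. (\<Sum>k<N. r k i * diagm N d k l) = ricci N c (diagm N d) i l)"
  show "r = (\<lambda>k i. if k < N \<and> i < N then ricci N c (diagm N d) i k / d k else 0)"
  proof (intro ext)
    fix k i show "r k i = (if k < N \<and> i < N then ricci N c (diagm N d) i k / d k else 0)"
    proof (cases "k < N \<and> i < N")
      case True
      then have "r k i * d k = ricci N c (diagm N d) i k" using H by (simp add: sum_diag_r)
      then show ?thesis using True d by (simp add: field_simps)
    next
      case False then show ?thesis using H by auto
    qed
  qed
qed


definition d1 :: "nat \<Rightarrow> real" where "d1 i = (if i = 2 then -1 else 1)"
definition d2 :: "nat \<Rightarrow> real" where "d2 i = (if i = 0 then -1 else 1)"
lemma g1_eq: "g1 = diagm 3 d1" by (auto simp: g1_def diagm_def d1_def fun_eq_iff)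
lemma g2_eq: "g2 = diagm 3 d2" by (auto simp: g2_def diagm_def d2_def fun_eq_iff)
lemma d1nz: "\<forall>i<3. d1 i \<noteq> 0" by (simp add: d1_def)
lemma d2nz: "\<forall>i<3. d2 i \<noteq> 0" by (simp add: d2_def)

definition Dh :: "nat \<Rightarrow> nat \<Rightarrow> real" where "Dh k i = (if k = i then (if k = 0 then -2 else -1) else 0)"

lemma der_h3: "derivation 3 h3 Dh"
  unfolding derivation_def by (simp add: all3 sum3 h3_def Dh_def)

lemma sol1: "alg_ricci_soliton 3 h3 g1"
  unfolding alg_ricci_soliton_def
proof (intro conjI exI)
  show "lie_alg 3 h3" unfolding lie_alg_def by (simp add: all3 sum3 h3_def)
  show "pr_metric 3 g1" unfolding g1_eq by (rule pr_diag[OF d1nz])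
  show "derivation 3 h3 Dh" by (rule der_h3)
  show "\<forall>k<3. \<forall>i<3. ricci_op 3 h3 g1 k i = 3/2 * (if k = i then 1 else 0) + Dh k i"
    unfolding g1_eq ricci_op_diag[OF d1nz] ricci_def curv_def Let_def christoffel_diag[OF d1nz]
    by (simp add: all3 sum3 chr_def h3_def d1_def Dh_def)
qed

lemma sol2: "alg_ricci_soliton 3 h3 g2"
  unfolding alg_ricci_soliton_def
proof (intro conjI exI)
  show "lie_alg 3 h3" unfolding lie_alg_def by (simp add: all3 sum3 h3_def)
  show "pr_metric 3 g2" unfolding g2_eq by (rule pr_diag[OF d2nz])
  show "derivation 3 h3 Dh" by (rule der_h3)
  show "\<forall>k<3. \<forall>i<3. ricci_op 3 h3 g2 k i = 3/2 * (if k = i then 1 else 0) + Dh k i"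
    unfolding g2_eq ricci_op_diag[OF d2nz] ricci_def curv_def Let_def christoffel_diag[OF d2nz]
    by (simp add: all3 sum3 chr_def h3_def d2_def Dh_def)
qed

lemma span_zero: "(\<lambda>_. 0) \<in> lin_span S"
  unfolding lin_span_def by (rule CollectI, rule exI[of _ "{}"]) auto

lemma span_mem: "u \<in> S \<Longrightarrow> u \<in> lin_span S"
  unfolding lin_span_def by (rule CollectI, rule exI[of _ "{u}"]) (auto intro!: exI[of _ "\<lambda>_. 1"])

lemma span_vanish: "\<forall>u\<in>S. u p = 0 \<Longrightarrow> v \<in> lin_span S \<Longrightarrow> v p = 0"
  unfolding lin_span_def by (auto intro!: sum.neutral)

lemma nil_h3: "nilpotent_la 3 h3"
proof -
  have L1: "\<forall>v\<in>lcs 3 h3 1. \<forall>p. p \<noteq> 0 \<longrightarrow> v p = 0"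
  proof (intro ballI allI impI)
    fix v p assume v: "v \<in> lcs 3 h3 1" and p: "p \<noteq> (0::nat)"
    have "\<forall>u\<in>{brk 3 h3 X Y | X Y. X \<in> vecs 3 \<and> Y \<in> lcs 3 h3 0}. u p = 0"
      using p by (auto simp: brk_def sum3 h3_def)
    moreover have "v \<in> lin_span {brk 3 h3 X Y | X Y. X \<in> vecs 3 \<and> Y \<in> lcs 3 h3 0}"
      using v by (simp only: One_nat_def lcs.simps(2))
    ultimately show "v p = 0" by (rule span_vanish)
  qed
  have "lcs 3 h3 2 = {\<lambda>_. 0}"
  proof
    show "{\<lambda>_. 0} \<subseteq> lcs 3 h3 2" by (simp add: numeral_2_eq_2 span_zero)
    show "lcs 3 h3 2 \<subseteq> {\<lambda>_. 0}"
    proof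
      fix v assume v: "v \<in> lcs 3 h3 2"
      have "v p = 0" for p
      proof -
        have "\<forall>u\<in>{brk 3 h3 X Y | X Y. X \<in> vecs 3 \<and> Y \<in> lcs 3 h3 1}. u p = 0"
        proof (intro ballI)
          fix u assume "u \<in> {brk 3 h3 X Y | X Y. X \<in> vecs 3 \<and> Y \<in> lcs 3 h3 1}"
          then obtain X Y where u: "u = brk 3 h3 X Y" and Y: "Y \<in> lcs 3 h3 1" by blast
          have "Y 1 = 0" "Y 2 = 0" using L1 Y by auto
          then show "u p = 0" unfolding u by (simp add: brk_def sum3 h3_def)
        qed
        moreover have "v \<in> lin_span {brk 3 h3 X Y | X Y. X \<in> vecs 3 \<and> Y \<in> lcs 3 h3 1}"
          using v by (simp only: numeral_2_eq_2 One_nat_def lcs.simps(2))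
        ultimately show ?thesis by (rule span_vanish)
      qed
      then show "v \<in> {\<lambda>_. 0}" by auto
    qed
  qed
  then show ?thesis unfolding nilpotent_la_def by blast
qed


definition dd :: "nat \<Rightarrow> real" where "dd j = (if j = 0 then 1 else 1/2)"
definition c4 :: sconst where
  "c4 i j k = h3 i j k + (if i = 3 \<and> j = k \<and> j < 3 then dd j else if j = 3 \<and> i = k \<and> i < 3 then - dd i else 0)"
definition ext4 :: "(nat \<Rightarrow> real) \<Rightarrow> nat \<Rightarrow> real" where "ext4 d i = (if i < 3 then d i else -1)"

lemma lie_c4: "lie_alg 4 c4"
  unfolding lie_alg_def by (simp add: all4 sum4 c4_def h3_def dd_def)

lemma dser1: "dser 4 c4 1 = vecs 3"
proof
  show "dser 4 c4 1 \<subseteq> vecs 3"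
  proof
    fix v assume v: "v \<in> dser 4 c4 1"
    have "v p = 0" if p: "p \<ge> 3" for p
    proof -
      have "\<forall>u\<in>{brk 4 c4 X Y | X Y. X \<in> dser 4 c4 0 \<and> Y \<in> dser 4 c4 0}. u p = 0"
        using p by (auto simp: brk_def sum4 c4_def h3_def)
      moreover have "v \<in> lin_span {brk 4 c4 X Y | X Y. X \<in> dser 4 c4 0 \<and> Y \<in> dser 4 c4 0}"
        using v by (simp only: One_nat_def dser.simps(2))
      ultimately show "v p = 0" by (rule span_vanish)
    qed
    then show "v \<in> vecs 3" by (simp add: vecs_def)
  qed
  show "vecs 3 \<subseteq> dser 4 c4 1"
  proof
    fix v assume v: "v \<in> vecs 3"
    define w where "w = (\<lambda>i. if i = 0 then v 0 else if i = 1 \<or> i = 2 then 2 * v i else (0::real))"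
    define e3 where "e3 = (\<lambda>i::nat. if i = 3 then 1 else (0::real))"
    have w: "w \<in> vecs 4" and e: "e3 \<in> vecs 4" by (auto simp: vecs_def w_def e3_def)
    have "brk 4 c4 e3 w = v"
    proof
      fix k show "brk 4 c4 e3 w k = v k"
      proof (cases "k < 4")
        case True
        then have "k = 0 \<or> k = 1 \<or> k = 2 \<or> k = 3" by auto
        then show ?thesis using v by (auto simp: brk_def sum4 c4_def h3_def dd_def w_def e3_def vecs_def)
      next
        case False then show ?thesis using v by (simp add: brk_def vecs_def)
      qed
    qed
    then have "v \<in> {brk 4 c4 X Y | X Y. X \<in> dser 4 c4 0 \<and> Y \<in> dser 4 c4 0}"
      using w e by auto
    then have "v \<in> lin_span {brk 4 c4 X Y | X Y. X \<in> dser 4 c4 0 \<and> Y \<in> dser 4 c4 0}"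
      by (rule span_mem)
    then show "v \<in> dser 4 c4 1" by (simp only: One_nat_def dser.simps(2))
  qed
qed

lemma solv_c4: "solvable_la 4 c4"
proof -
  have L2: "\<forall>v\<in>dser 4 c4 2. \<forall>p. p \<noteq> 0 \<longrightarrow> v p = 0"
  proof (intro ballI allI impI)
    fix v p assume v: "v \<in> dser 4 c4 2" and p: "p \<noteq> (0::nat)"
    have "\<forall>u\<in>{brk 4 c4 X Y | X Y. X \<in> dser 4 c4 1 \<and> Y \<in> dser 4 c4 1}. u p = 0"
    proof
      fix u assume "u \<in> {brk 4 c4 X Y | X Y. X \<in> dser 4 c4 1 \<and> Y \<in> dser 4 c4 1}"
      then obtain X Y where u: "u = brk 4 c4 X Y" and X: "X \<in> vecs 3" and Y: "Y \<in> vecs 3"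
        using dser1 by blast
      have "X 3 = 0" "Y 3 = 0" using X Y by (auto simp: vecs_def)
      then show "u p = 0" using p unfolding u by (simp add: brk_def sum4 c4_def h3_def)
    qed
    moreover have "v \<in> lin_span {brk 4 c4 X Y | X Y. X \<in> dser 4 c4 1 \<and> Y \<in> dser 4 c4 1}"
      using v by (simp only: numeral_2_eq_2 One_nat_def dser.simps(2))
    ultimately show "v p = 0" by (rule span_vanish)
  qed
  have "dser 4 c4 3 = {\<lambda>_. 0}"
  proof
    show "{\<lambda>_. 0} \<subseteq> dser 4 c4 3" by (simp add: numeral_3_eq_3 span_zero)
    show "dser 4 c4 3 \<subseteq> {\<lambda>_. 0}"
    proof
      fix v assume v: "v \<in> dser 4 c4 3"
      have "v p = 0" for p
      proof -
        have "\<forall>u\<in>{brk 4 c4 X Y | X Y. X \<in> dser 4 c4 2 \<and> Y \<in> dser 4 c4 2}. u p = 0"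
        proof (intro ballI)
          fix u assume "u \<in> {brk 4 c4 X Y | X Y. X \<in> dser 4 c4 2 \<and> Y \<in> dser 4 c4 2}"
          then obtain X Y where u: "u = brk 4 c4 X Y" and X: "X \<in> dser 4 c4 2" and Y: "Y \<in> dser 4 c4 2" by blast
          have "X 1 = 0" "X 2 = 0" "X 3 = 0" "Y 1 = 0" "Y 2 = 0" "Y 3 = 0" using L2 X Y by auto
          then show "u p = 0" unfolding u by (simp add: brk_def sum4 c4_def h3_def)
        qed
        moreover have "v \<in> lin_span {brk 4 c4 X Y | X Y. X \<in> dser 4 c4 2 \<and> Y \<in> dser 4 c4 2}"
          using v by (simp only: numeral_3_eq_3 numeral_2_eq_2 dser.simps(2))
        ultimately show ?thesis by (rule span_vanish)
      qed
      then show "v \<in> {\<lambda>_. 0}" by auto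
    qed
  qed
  then show ?thesis unfolding solvable_la_def by blast
qed

lemma ext_generic: assumes d: "\<forall>i<3. d i \<noteq> 0"
  shows "metric_solv_ext 3 h3 (diagm 3 d) 4 c4 (diagm 4 (ext4 d))"
  unfolding metric_solv_ext_def
proof (intro conjI)
  show "lie_alg 4 c4" by (rule lie_c4)
  show "solvable_la 4 c4" by (rule solv_c4)
  show "dser 4 c4 1 = vecs 3" by (rule dser1)
  show "pr_metric 4 (diagm 4 (ext4 d))"
    by (rule pr_diag) (use d in \<open>simp add: all4 ext4_def\<close>)
  show "\<forall>i<3. \<forall>j<3. \<forall>k<4. c4 i j k = (if k < 3 then h3 i j k else 0)"
    by (simp add: all3 all4 c4_def h3_def)
  show "\<forall>i<3. \<forall>j<3. diagm 4 (ext4 d) i j = diagm 3 d i j"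
    by (simp add: all3 diagm_def ext4_def)
  show "{X\<in>vecs 4. \<forall>Y\<in>vecs 4. (\<forall>i<3. Y i = 0) \<longrightarrow> ip 4 (diagm 4 (ext4 d)) X Y = 0} = vecs 3"
  proof (intro equalityI subsetI)
    fix X assume X: "X \<in> {X\<in>vecs 4. \<forall>Y\<in>vecs 4. (\<forall>i<3. Y i = 0) \<longrightarrow> ip 4 (diagm 4 (ext4 d)) X Y = 0}"
    define e3 where "e3 = (\<lambda>i::nat. if i = 3 then 1 else (0::real))"
    have "e3 \<in> vecs 4" "\<forall>i<3. e3 i = 0" by (auto simp: vecs_def e3_def)
    then have "ip 4 (diagm 4 (ext4 d)) X e3 = 0" using X by blast
    then have "X 3 = 0" by (simp add: ip_diag sum4 e3_def ext4_def)
    then have X3: "X 3 = 0" .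
    show "X \<in> vecs 3" unfolding vecs_def
    proof (intro CollectI allI impI)
      fix i :: nat assume "3 \<le> i"
      then have "i = 3 \<or> 4 \<le> i" by auto
      then show "X i = 0" using X X3 by (auto simp: vecs_def)
    qed
  next
    fix X assume X: "X \<in> vecs 3"
    then have X3: "X 3 = 0" by (simp add: vecs_def)
    show "X \<in> {X\<in>vecs 4. \<forall>Y\<in>vecs 4. (\<forall>i<3. Y i = 0) \<longrightarrow> ip 4 (diagm 4 (ext4 d)) X Y = 0}"
      using X X3 by (auto simp: vecs_def ip_diag sum4 all3)
  qed
qed auto


lemma e1nz: "\<forall>i<4. ext4 d1 i \<noteq> 0" by (simp add: all4 ext4_def d1_def)
lemma e2nz: "\<forall>i<4. ext4 d2 i \<noteq> 0" by (simp add: all4 ext4_def d2_def)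

lemma ein1: "einstein 4 c4 (diagm 4 (ext4 d1))"
  unfolding einstein_def
proof (intro exI[of _ "3/2"])
  show "\<forall>i<4. \<forall>j<4. ricci 4 c4 (diagm 4 (ext4 d1)) i j = 3/2 * diagm 4 (ext4 d1) i j"
    unfolding ricci_def curv_def Let_def christoffel_diag[OF e1nz]
    by (simp add: all4 sum4 chr_def c4_def h3_def dd_def ext4_def d1_def diagm_def)
qed

lemma ein2: "einstein 4 c4 (diagm 4 (ext4 d2))"
  unfolding einstein_def
proof (intro exI[of _ "3/2"])
  show "\<forall>i<4. \<forall>j<4. ricci 4 c4 (diagm 4 (ext4 d2)) i j = 3/2 * diagm 4 (ext4 d2) i j"
    unfolding ricci_def curv_def Let_def christoffel_diag[OF e2nz]
    by (simp add: all4 sum4 chr_def c4_def h3_def dd_def ext4_def d2_def diagm_def)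
qed

theorem mainTheorem4:
  shows "nilsoliton 3 h3 g1 \<and> nilsoliton 3 h3 g2 \<and>
    (\<exists>N c' G'. metric_solv_ext 3 h3 g1 N c' G' \<and> einstein N c' G') \<and>
    (\<exists>N c' G'. metric_solv_ext 3 h3 g2 N c' G' \<and> einstein N c' G')"
proof (intro conjI)
  show "nilsoliton 3 h3 g1" unfolding nilsoliton_def using nil_h3 sol1 by blast
  show "nilsoliton 3 h3 g2" unfolding nilsoliton_def using nil_h3 sol2 by blast
  show "\<exists>N c' G'. metric_solv_ext 3 h3 g1 N c' G' \<and> einstein N c' G'"
    unfolding g1_eq using ext_generic[OF d1nz] ein1 by blast
  show "\<exists>N c' G'. metric_solv_ext 3 h3 g2 N c' G' \<and> einstein N c' G'"
    unfolding g2_eq using ext_generic[OF d2nz] ein2 by blast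
qed

end
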